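(* Let $P$ be a point in $D$ with $P\neq O=(0,0)$. Let $u_1,u_2\in S^1$ be the intersections of the line $OP$ with $S^1$, with $|u_1P|<|u_2P|$. Then $\psi_P'(v)$ is monotonically increasing for $v\in arc[u_2,u_1)$ and monotonically decreasing for $v\in arc[u_1,u_2)$.
   Context: $D$ is the open unit disk in $\mathbb R^2$, $S^1$ its boundary circle identified with $\mathbb R/\mathbb Z$ via the counterclockwise normalized angle, $\pi:\mathbb R\to S^1$ the projection. For $P\in D$ and $v\in S^1$, $\psi_P(v)$ is the second intersection point of the line $vP$ with $S^1$. For a homeomorphism $g$ of $S^1$ with lift $\overline g$ ($\overline g(0)\in[0,1)$), $g'(x)=\overline g'(u)$ for $u\in\pi^{-1}(x)$. For $w_1,w_2\in S^1$, $arc[w_1,w_2)$ is the counterclockwise arc from $w_1$ to $w_2$ including $w_1$ and excluding $w_2$; monotonicity is along the arc traversed counterclockwise. $|XY|$ is Euclidean distance. *)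

theory Defs
  imports "HOL-Analysis.Analysis"
begin

text \<open>The plane R^2 is identified with the complex plane; D = ball 0 1, S^1 = sphere 0 1.
  S^1 is identified with R/Z via the normalized counterclockwise angle:
  the projection pi : R -> S^1 is circ_pi.\<close>

definition circ_pi :: "real \<Rightarrow> complex" where
  "circ_pi t = cis (2 * pi * t)"

definition psi :: "complex \<Rightarrow> complex \<Rightarrow> complex" where
  "psi P v = (THE w. norm w = 1 \<and> w \<noteq> v \<and> (\<exists>t::real. w = v + of_real t * (P - v)))"

definition circ_lift :: "(complex \<Rightarrow> complex) \<Rightarrow> real \<Rightarrow> real" where
  "circ_lift g = (SOME gb. continuous_on UNIV gb \<and> (\<forall>u. circ_pi (gb u) = g (circ_pi u))
                          \<and> 0 \<le> gb 0 \<and> gb 0 < 1)"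

definition circ_deriv :: "(complex \<Rightarrow> complex) \<Rightarrow> complex \<Rightarrow> real" where
  "circ_deriv g x = deriv (circ_lift g) (SOME u. circ_pi u = x)"

text \<open>f is monotonically increasing (resp. decreasing) on arc[w1,w2), traversed counterclockwise:
  parametrize the arc as circ_pi t for t in [a, a + frac(b - a)) where circ_pi a = w1, circ_pi b = w2.\<close>
definition incr_on_arc :: "(complex \<Rightarrow> real) \<Rightarrow> complex \<Rightarrow> complex \<Rightarrow> bool" where
  "incr_on_arc f w1 w2 \<longleftrightarrow> (\<forall>a b. circ_pi a = w1 \<longrightarrow> circ_pi b = w2 \<longrightarrow>
      mono_on {a..<a + frac (b - a)} (\<lambda>t. f (circ_pi t)))"

definition decr_on_arc :: "(complex \<Rightarrow> real) \<Rightarrow> complex \<Rightarrow> complex \<Rightarrow> bool" where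
  "decr_on_arc f w1 w2 \<longleftrightarrow> (\<forall>a b. circ_pi a = w1 \<longrightarrow> circ_pi b = w2 \<longrightarrow>
      monotone_on {a..<a + frac (b - a)} (\<le>) (\<ge>) (\<lambda>t. f (circ_pi t)))"

end

theory Submission
  imports Defs
begin


lemma alg:
  fixes z :: complex
  assumes "Re (1 - z) > 0"
  shows "1 + Im (2 * of_real pi * \<i> * z / (1 - z)) / pi = (1 - (norm z)^2) / (norm (1 - z))^2"
proof -
  define x where "x = Re z"
  define y where "y = Im z"
  have d: "(1 - x)^2 + y^2 > 0" using assms unfolding x_def by (intro add_pos_nonneg) auto
  have e1: "Im (2 * of_real pi * \<i> * z / (1 - z)) = 2 * pi * ((x * (1 - x) - y * y) / ((1 - x)^2 + y^2))"
    unfolding x_def y_def by (simp add: Im_divide Re_divide power2_eq_square algebra_simps)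
  have e2: "(norm z)^2 = x^2 + y^2" "(norm (1 - z))^2 = (1 - x)^2 + y^2"
    unfolding x_def y_def cmod_power2 by simp_all
  define D where "D = (1 - x)^2 + y^2"
  have num: "D + 2 * (x * (1 - x) - y * y) = 1 - (x^2 + y^2)"
    unfolding D_def by (simp add: power2_eq_square algebra_simps)
  have "1 + 2 * pi * ((x * (1 - x) - y * y) / D) / pi = 1 + 2 * ((x * (1 - x) - y * y) / D)"
    by simp
  also have "\<dots> = (D + 2 * (x * (1 - x) - y * y)) / D" using d unfolding D_def[symmetric]
    by (simp add: add_divide_distrib)
  finally show ?thesis unfolding e1 e2 D_def[symmetric] num .
qed

lemma qre_pos:
  fixes P v :: complex
  assumes "norm v = 1" "norm P < 1"
  shows "Re (1 - cnj v * P) > 0"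
proof -
  have "\<bar>Re (cnj v * P)\<bar> \<le> norm (cnj v * P)" by (rule abs_Re_le_cmod)
  also have "\<dots> = norm P" using assms by (simp add: norm_mult)
  finally show ?thesis using assms by simp
qed

lemma vcnj: "norm v = 1 \<Longrightarrow> v * cnj v = 1"
  by (metis complex_norm_square mult.commute of_real_1 power_one)

lemma psi_formula:
  fixes P v :: complex
  assumes v: "norm v = 1" and P: "norm P < 1"
  defines "q \<equiv> 1 - cnj v * P"
  shows "psi P v = v * (1 - of_real (2 * Re q / (norm q)^2) * q)"
proof -
  define t0 where "t0 = 2 * Re q / (norm q)^2"
  have a: "Re q > 0" unfolding q_def using qre_pos[OF v P] .
  have nq: "(norm q)^2 = (Re q)^2 + (Im q)^2" by (rule cmod_power2)
  have nqp: "(norm q)^2 > 0" using a by (auto simp: complex_eq_iff)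
  have Pv: "P - v = - v * q" unfolding q_def using vcnj[OF v]
    by (simp add: algebra_simps)
  have key: "norm (1 - of_real s * q) = 1 \<longleftrightarrow> s = 0 \<or> s = t0" for s
  proof -
    have "norm (1 - of_real s * q) = 1 \<longleftrightarrow> (norm (1 - of_real s * q))^2 = 1"
      using norm_ge_zero[of "1 - of_real s * q"] by (auto simp: power2_eq_1_iff simp del: norm_ge_zero)
    also have "(norm (1 - of_real s * q))^2 = (1 - s * Re q)^2 + (s * Im q)^2"
      by (simp add: cmod_power2)
    also have "(1 - s * Re q)^2 + (s * Im q)^2 = 1 + s * (s * (norm q)^2 - 2 * Re q)"
      unfolding nq by (simp add: power2_eq_square algebra_simps)
    finally have "norm (1 - of_real s * q) = 1 \<longleftrightarrow> s * (s * (norm q)^2 - 2 * Re q) = 0" by simp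
    also have "\<dots> \<longleftrightarrow> s = 0 \<or> s = t0" unfolding t0_def using nqp
      by (auto simp: field_simps)
    finally show ?thesis .
  qed
  have t0pos: "t0 > 0" unfolding t0_def using a nqp by simp
  have qnz: "q \<noteq> 0" using a by auto
  show ?thesis unfolding t0_def[symmetric] psi_def
  proof (rule the_equality)
    show "norm (v * (1 - of_real t0 * q)) = 1 \<and> v * (1 - of_real t0 * q) \<noteq> v \<and>
      (\<exists>t::real. v * (1 - of_real t0 * q) = v + of_real t * (P - v))"
    proof (intro conjI)
      show "norm (v * (1 - of_real t0 * q)) = 1" using key[of t0] v by (simp add: norm_mult)
      show "v * (1 - of_real t0 * q) \<noteq> v" using v t0pos qnz by auto
      show "\<exists>t::real. v * (1 - of_real t0 * q) = v + of_real t * (P - v)"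
        by (rule exI[of _ t0]) (simp add: Pv algebra_simps)
    qed
  next
    fix w assume w: "norm w = 1 \<and> w \<noteq> v \<and> (\<exists>t::real. w = v + of_real t * (P - v))"
    then obtain s where s: "w = v + of_real s * (P - v)" by blast
    have ws: "w = v * (1 - of_real s * q)" using s Pv by (simp add: algebra_simps)
    have "norm (1 - of_real s * q) = 1" using w ws v by (simp add: norm_mult)
    moreover have "s \<noteq> 0" using w s by auto
    ultimately have "s = t0" using key by blast
    then show "w = v * (1 - of_real t0 * q)" using ws by simp
  qed
qed



definition Gf :: "complex \<Rightarrow> real \<Rightarrow> real" where
  "Gf P u = u + 1/2 + Im (Ln (1 - cnj (circ_pi u) * P)) / pi"

lemma cnj_circ: "cnj (circ_pi u) = exp (- (2 * of_real pi * \<i>) * of_real u)"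
proof -
  have "cnj (circ_pi u) = cis (-(2*pi*u))" by (simp add: circ_pi_def cis_cnj)
  also have "\<dots> = exp (\<i> * complex_of_real (-(2*pi*u)))" by (rule cis_conv_exp)
  finally show ?thesis by (simp add: algebra_simps)
qed

lemma norm_circ: "norm (circ_pi u) = 1" by (simp add: circ_pi_def)

lemma Gf_deriv:
  assumes P: "norm P < 1"
  shows "(Gf P has_real_derivative (1 - (norm P)^2) / (norm (circ_pi u - P))^2) (at u)"
proof -
  define F where "F z = Ln (1 - exp (- (2 * of_real pi * \<i>) * z) * P)" for z
  define z where "z = cnj (circ_pi u) * P"
  have Gfe: "Gf P = (\<lambda>x. x + 1/2 + Im (F (of_real x)) / pi)"
    by (rule ext) (simp add: Gf_def F_def cnj_circ)
  have re: "Re (1 - z) > 0" unfolding z_def using qre_pos[OF norm_circ P] .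
  have nr: "1 - z \<notin> \<real>\<^sub>\<le>\<^sub>0"
  proof
    assume "1 - z \<in> \<real>\<^sub>\<le>\<^sub>0"
    then obtain r where "1 - z = of_real r" "r \<le> 0" unfolding nonpos_Reals_def by auto
    then have "Re (1 - z) \<le> 0" by (metis Re_complex_of_real)
    then show False using re by simp
  qed
  have zz: "z = exp (- (2 * of_real pi * \<i>) * of_real u) * P" by (simp add: z_def cnj_circ)
  have inner: "((\<lambda>w. 1 - exp (- (2 * of_real pi * \<i>) * w) * P) has_field_derivative
      (2 * of_real pi * \<i> * z)) (at (of_real u))"
    unfolding zz by (auto intro!: derivative_eq_intros)
  have lnd: "(Ln has_field_derivative inverse (1 - z))
     (at ((\<lambda>w. 1 - exp (- (2 * of_real pi * \<i>) * w) * P) (of_real u)))"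
    using has_field_derivative_Ln[OF nr] zz by simp
  have "(F has_field_derivative (2 * of_real pi * \<i> * z / (1 - z))) (at (of_real u))"
    unfolding F_def
    using DERIV_chain2[OF lnd inner]
    by (simp add: field_simps)
  then have "((\<lambda>x. F (of_real x)) has_vector_derivative (2 * of_real pi * \<i> * z / (1 - z))) (at u)"
    by (rule has_vector_derivative_real_field)
  then have d1: "((\<lambda>x. Im (F (of_real x))) has_real_derivative Im (2 * of_real pi * \<i> * z / (1 - z))) (at u)"
    by (rule has_field_derivative_Im)
  have d2: "(Gf P has_real_derivative 1 + Im (2 * of_real pi * \<i> * z / (1 - z)) / pi) (at u)"
    unfolding Gfe using DERIV_add[OF DERIV_add[OF DERIV_ident DERIV_const[of "1/2"]] DERIV_cdivide[OF d1, of pi]]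
    by simp
  have nz: "norm z = norm P" unfolding z_def by (simp add: norm_mult norm_circ)
  have n1z: "norm (circ_pi u - P) = norm (1 - z)"
  proof -
    have "circ_pi u - P = circ_pi u * (1 - z)" unfolding z_def using vcnj[OF norm_circ, of u]
      by (simp add: algebra_simps)
    then show ?thesis by (simp add: norm_mult norm_circ)
  qed
  have "1 + Im (2 * of_real pi * \<i> * z / (1 - z)) / pi = (1 - (norm P)^2) / (norm (circ_pi u - P))^2"
    unfolding n1z nz[symmetric] by (rule alg[OF re])
  then show ?thesis using d2 by simp
qed



lemma Gf_lift:
  assumes P: "norm P < 1"
  shows "circ_pi (Gf P u) = psi P (circ_pi u)"
proof -
  define v where "v = circ_pi u"
  define q where "q = 1 - cnj v * P"
  have re: "Re q > 0" unfolding q_def v_def using qre_pos[OF norm_circ P] .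
  have qnz: "q \<noteq> 0" using re by auto
  have nv: "norm v = 1" unfolding v_def by (rule norm_circ)
  have nqp: "norm q > 0" using qnz by simp
  have c: "cis (Im (Ln q)) = q / of_real (norm q)"
    using Arg_eq_Im_Ln[OF qnz] cis_Arg[OF qnz] sgn_eq by metis
  have "circ_pi (Gf P u) = cis (2 * pi * u) * cis pi * (cis (Im (Ln q)) * cis (Im (Ln q)))"
  proof -
    have "2 * pi * Gf P u = 2 * pi * u + pi + (Im (Ln q) + Im (Ln q))"
      unfolding Gf_def q_def v_def by (simp add: field_simps)
    then show ?thesis unfolding circ_pi_def by (simp only: cis_mult)
  qed
  also have "\<dots> = v * (- (q * q / (of_real (norm q))^2))"
  proof -
    have "cis (Im (Ln q)) * cis (Im (Ln q)) = q * q / (of_real (norm q))^2"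
      unfolding c power2_eq_square by (rule times_divide_times_eq)
    then show ?thesis unfolding v_def circ_pi_def by simp
  qed
  also have "- (q * q / (of_real (norm q))^2) = 1 - of_real (2 * Re q / (norm q)^2) * q"
  proof -
    have n2: "(norm q)^2 = (Re q)^2 + (Im q)^2" by (rule cmod_power2)
    have d: "(Re q)^2 + (Im q)^2 \<noteq> 0" using nqp n2 by auto
    show ?thesis unfolding of_real_power[symmetric] n2 using d
      by (simp add: complex_eq_iff field_simps power2_eq_square)
  qed
  also have "v * \<dots> = psi P v" unfolding q_def
    by (rule psi_formula[OF nv P, symmetric])
  finally show ?thesis unfolding v_def .
qed

lemma Gf_0:
  assumes P: "norm P < 1"
  shows "0 \<le> Gf P 0 \<and> Gf P 0 < 1"
proof -
  have re: "Re (1 - cnj (circ_pi 0) * P) > 0" using qre_pos[OF norm_circ P] .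
  have "\<bar>Im (Ln (1 - cnj (circ_pi 0) * P))\<bar> < pi/2" by (rule Re_Ln_pos_lt_imp[OF re])
  then show ?thesis unfolding Gf_def by (auto simp: field_simps abs_less_iff)
qed

lemma Gf_cont: "norm P < 1 \<Longrightarrow> continuous_on UNIV (Gf P)"
  using Gf_deriv DERIV_isCont continuous_at_imp_continuous_on by blast

lemma lift_eq:
  assumes P: "norm P < 1"
  shows "circ_lift (psi P) = Gf P"
proof -
  let ?Q = "\<lambda>gb. continuous_on UNIV gb \<and> (\<forall>u. circ_pi (gb u) = psi P (circ_pi u))
                          \<and> 0 \<le> gb 0 \<and> gb 0 < 1"
  have "?Q (Gf P)" using Gf_cont[OF P] Gf_lift[OF P] Gf_0[OF P] by blast
  then have L: "?Q (circ_lift (psi P))" unfolding circ_lift_def by (rule someI[where P="?Q"])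
  define h where "h u = circ_lift (psi P) u - Gf P u" for u
  have hint: "h u \<in> \<int>" for u
  proof -
    have "cis (2 * pi * circ_lift (psi P) u) = cis (2 * pi * Gf P u)"
      using L Gf_lift[OF P, of u] unfolding circ_pi_def by metis
    then have "cis (2 * pi * h u) = 1"
    proof -
      have "cis (2 * pi * h u) = cis (2 * pi * circ_lift (psi P) u) / cis (2 * pi * Gf P u)"
        unfolding h_def cis_divide by (simp add: right_diff_distrib)
      then show ?thesis using \<open>cis (2 * pi * circ_lift (psi P) u) = cis (2 * pi * Gf P u)\<close> by simp
    qed
    then have "cos (2 * pi * h u) = 1" by (metis cis.sel(1) one_complex.sel(1))
    then obtain n :: int where "2 * pi * h u = real_of_int n * 2 * pi" using cos_one_2pi_int by blast
    then have "h u = n" by simp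
    then show ?thesis by simp
  qed
  have hc: "continuous_on UNIV h" unfolding h_def using L Gf_cont[OF P]
    by (intro continuous_intros) auto
  have "h constant_on UNIV"
  proof (rule continuous_discrete_range_constant[OF connected_UNIV hc])
    fix x :: real assume "x \<in> UNIV"
    show "\<exists>e>0. \<forall>y. y \<in> UNIV \<and> h y \<noteq> h x \<longrightarrow> e \<le> norm (h y - h x)"
    proof (intro exI[of _ 1] conjI allI impI)
      fix y assume "y \<in> UNIV \<and> h y \<noteq> h x"
      then show "1 \<le> norm (h y - h x)" using Ints_nonzero_abs_ge1[of "h y - h x"] hint
        by (simp add: Ints_diff)
    qed simp
  qed
  then obtain c where c: "\<And>u. h u = c" unfolding constant_on_def by blast
  have "\<bar>h 0\<bar> < 1" unfolding h_def using L Gf_0[OF P] by auto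
  then have "h 0 = 0" using Ints_nonzero_abs_ge1[OF hint[of 0]] by fastforce
  then have "\<And>u. h u = 0" using c by metis
  then show ?thesis unfolding h_def by auto
qed

lemma circ_deriv_psi:
  assumes P: "norm P < 1"
  shows "circ_deriv (psi P) (circ_pi t) = (1 - (norm P)^2) / (norm (circ_pi t - P))^2"
proof -
  define u where "u = (SOME u. circ_pi u = circ_pi t)"
  have u: "circ_pi u = circ_pi t" unfolding u_def by (rule someI) simp
  show ?thesis unfolding circ_deriv_def lift_eq[OF P] u_def[symmetric]
    using DERIV_imp_deriv[OF Gf_deriv[OF P, of u]] u by simp
qed



lemma arc_formula:
  assumes P: "norm P < 1" and P0: "P \<noteq> 0" and s: "\<sigma>^2 = (1::real)"
    and a: "circ_pi a = of_real \<sigma> * (P / of_real (norm P))"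
  shows "circ_deriv (psi P) (circ_pi t) =
     (1 - (norm P)^2) / (1 + (norm P)^2 - 2 * \<sigma> * norm P * cos (2 * pi * (t - a)))"
proof -
  define r where "r = norm P"
  define e where "e = P / of_real r"
  define x where "x = 2 * pi * (t - a)"
  have r0: "r > 0" using P0 unfolding r_def by simp
  have ne: "norm e = 1" unfolding e_def r_def using P0 by (simp add: norm_divide)
  have Pe: "P = e * of_real r" unfolding e_def using r0 by simp
  have ct: "circ_pi t = circ_pi a * cis x" unfolding circ_pi_def x_def cis_mult
    by (simp add: algebra_simps)
  have "circ_pi t - P = e * (of_real \<sigma> * cis x - of_real r)"
    unfolding ct a e_def[symmetric] r_def[symmetric] by (subst Pe) (simp add: algebra_simps)
  then have "(norm (circ_pi t - P))^2 = (norm (of_real \<sigma> * cis x - of_real r))^2"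
    by (simp add: norm_mult ne)
  also have "\<dots> = (\<sigma> * cos x - r)^2 + (\<sigma> * sin x)^2" by (simp add: cmod_power2)
  also have "\<dots> = \<sigma>^2 * ((sin x)^2 + (cos x)^2) + r^2 - 2 * \<sigma> * r * cos x"
    by algebra
  also have "\<dots> = 1 + r^2 - 2 * \<sigma> * r * cos x" using s by simp
  finally show ?thesis unfolding circ_deriv_psi[OF P] r_def[symmetric] x_def[symmetric] by simp
qed

lemma frac_half:
  assumes "circ_pi b = - circ_pi a"
  shows "frac (b - a) = 1/2"
proof -
  have "cis (2 * pi * (b - a)) = cis (2 * pi * b) / cis (2 * pi * a)"
    by (simp add: cis_divide right_diff_distrib)
  also have "\<dots> = -1" using assms unfolding circ_pi_def by (simp add: cis_neq_zero)
  finally have "cos (2 * pi * (b - a)) = -1" by (metis cis.sel(1) one_complex.sel(1) uminus_complex.sel(1))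
  then obtain n :: int where n: "2 * pi * (b - a) = (2 * real_of_int n + 1) * pi" using cos_eq_minus1 by blast
  then have "pi * (2 * (b - a)) = pi * (2 * real_of_int n + 1)" by (simp add: algebra_simps)
  then have "2 * (b - a) = 2 * real_of_int n + 1" by simp
  then have "b - a = of_int n + 1/2" by (simp add: field_simps)
  then show ?thesis unfolding frac_def by simp
qed

lemma cos_anti:
  assumes "0 \<le> s1" "s1 \<le> s2" "s2 \<le> 1/2"
  shows "cos (2 * pi * s2) \<le> cos (2 * pi * s1)"
  by (rule cos_monotone_0_pi_le) (use assms in auto)


lemma den_pos:
  assumes "0 \<le> r" "r < (1::real)" "\<sigma> = 1 \<or> \<sigma> = -1" and that: "\<bar>c\<bar> \<le> 1"
  shows "1 + r^2 - 2 * \<sigma> * r * c > 0"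
proof -
  have "\<bar>\<sigma>\<bar> = 1" using assms(3) by auto
  then have "\<bar>2 * \<sigma> * r * c\<bar> \<le> 2 * r" using that assms
    by (simp add: abs_mult mult_left_le)
  moreover have "(1 - r)^2 > 0" using assms by simp
  ultimately show ?thesis by (simp add: power2_eq_square algebra_simps)
qed

theorem lemma2p3:
  fixes P u1 u2 :: complex
  assumes "P \<in> ball 0 1" and "P \<noteq> 0"
    and "norm u1 = 1" and "norm u2 = 1"
    and "\<exists>t::real. u1 = of_real t * P" and "\<exists>t::real. u2 = of_real t * P"
    and "dist u1 P < dist u2 P"
  shows "incr_on_arc (circ_deriv (psi P)) u2 u1 \<and> decr_on_arc (circ_deriv (psi P)) u1 u2"
proof -
  have P: "norm P < 1" using assms(1) by simp
  define r where "r = norm P"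
  define e where "e = P / of_real r"
  have r0: "r > 0" using assms(2) unfolding r_def by simp
  have r1: "r < 1" using P unfolding r_def .
  have ne: "norm e = 1" unfolding e_def r_def using assms(2) by (simp add: norm_divide)
  have Pe: "P = of_real r * e" unfolding e_def using r0 by simp
  have sig: "\<exists>\<sigma>. (\<sigma> = 1 \<or> \<sigma> = -1) \<and> u = of_real \<sigma> * e"
    if un: "norm u = 1" and ut0: "\<exists>t::real. u = of_real t * P" for u
  proof -
    obtain t where t: "u = of_real t * P" using ut0 by blast
    have ut: "u = of_real (t * r) * e" unfolding t by (subst Pe) simp
    have "\<bar>t * r\<bar> = 1" using un ne unfolding ut by (simp add: norm_mult)
    then have "t * r = 1 \<or> t * r = -1" by linarith
    then show ?thesis using ut by blast
  qed
  obtain \<sigma>1 where s1: "\<sigma>1 = 1 \<or> \<sigma>1 = -1" "u1 = of_real \<sigma>1 * e" using sig assms(3,5) by blast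
  obtain \<sigma>2 where s2: "\<sigma>2 = 1 \<or> \<sigma>2 = -1" "u2 = of_real \<sigma>2 * e" using sig assms(4,6) by blast
  have dd: "dist (of_real \<sigma> * e) P = \<bar>\<sigma> - r\<bar>" for \<sigma>
  proof -
    have "of_real \<sigma> * e - P = of_real (\<sigma> - r) * e" by (subst Pe) (simp add: algebra_simps)
    then show ?thesis by (simp add: dist_norm norm_mult ne del: of_real_diff)
  qed
  have "\<bar>\<sigma>1 - r\<bar> < \<bar>\<sigma>2 - r\<bar>" using assms(7) unfolding s1(2) s2(2) dd .
  then have S1: "\<sigma>1 = 1" and S2: "\<sigma>2 = -1" using s1(1) s2(1) r0 r1 by auto
  have u1e: "u1 = of_real 1 * (P / of_real (norm P))" using s1(2) S1 unfolding e_def r_def by simp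
  have u2e: "u2 = of_real (-1) * (P / of_real (norm P))" using s2(2) S2 unfolding e_def r_def by simp
  have cosb: "\<bar>cos y\<bar> \<le> 1" for y :: real by simp
  show ?thesis
  proof
    show "incr_on_arc (circ_deriv (psi P)) u2 u1"
      unfolding incr_on_arc_def
    proof (intro allI impI)
      fix a b assume a: "circ_pi a = u2" and b: "circ_pi b = u1"
      have fr: "frac (b - a) = 1/2" by (rule frac_half) (simp add: a b u1e u2e)
      have f: "circ_deriv (psi P) (circ_pi t) = (1 - r^2) / (1 + r^2 - 2 * (-1) * r * cos (2 * pi * (t - a)))" for t
        using arc_formula[OF P assms(2), of "-1" a t] a u2e unfolding r_def by simp
      show "mono_on {a..<a + frac (b - a)} (\<lambda>t. circ_deriv (psi P) (circ_pi t))"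
      proof (rule mono_onI)
        fix t1 t2 assume t1: "t1 \<in> {a..<a + frac (b - a)}" and t2: "t2 \<in> {a..<a + frac (b - a)}" and le: "t1 \<le> t2"
        have c: "cos (2 * pi * (t2 - a)) \<le> cos (2 * pi * (t1 - a))"
          by (rule cos_anti) (use t1 t2 le fr in auto)
        have p1: "1 + r^2 - 2 * (-1) * r * cos (2 * pi * (t1 - a)) > 0"
          by (rule den_pos) (use r0 r1 cosb in auto)
        have p2: "1 + r^2 - 2 * (-1) * r * cos (2 * pi * (t2 - a)) > 0"
          by (rule den_pos) (use r0 r1 cosb in auto)
        have "(1 - r^2) / (1 + r^2 - 2 * (-1) * r * cos (2 * pi * (t1 - a))) \<le>
              (1 - r^2) / (1 + r^2 - 2 * (-1) * r * cos (2 * pi * (t2 - a)))"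
          apply (rule divide_left_mono)
          using c r0 apply simp
          using r0 r1 apply (simp add: power_le_one)
          using p1 p2 by simp
        then show "circ_deriv (psi P) (circ_pi t1) \<le> circ_deriv (psi P) (circ_pi t2)"
          unfolding f .
      qed
    qed
  next
    show "decr_on_arc (circ_deriv (psi P)) u1 u2"
      unfolding decr_on_arc_def
    proof (intro allI impI)
      fix a b assume a: "circ_pi a = u1" and b: "circ_pi b = u2"
      have fr: "frac (b - a) = 1/2" by (rule frac_half) (simp add: a b u1e u2e)
      have f: "circ_deriv (psi P) (circ_pi t) = (1 - r^2) / (1 + r^2 - 2 * 1 * r * cos (2 * pi * (t - a)))" for t
        using arc_formula[OF P assms(2), of "1" a t] a u1e unfolding r_def by simp
      show "monotone_on {a..<a + frac (b - a)} (\<le>) (\<ge>) (\<lambda>t. circ_deriv (psi P) (circ_pi t))"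
      proof (rule monotone_onI)
        fix t1 t2 assume t1: "t1 \<in> {a..<a + frac (b - a)}" and t2: "t2 \<in> {a..<a + frac (b - a)}" and le: "t1 \<le> t2"
        have c: "cos (2 * pi * (t2 - a)) \<le> cos (2 * pi * (t1 - a))"
          by (rule cos_anti) (use t1 t2 le fr in auto)
        have p1: "1 + r^2 - 2 * 1 * r * cos (2 * pi * (t1 - a)) > 0"
          by (rule den_pos) (use r0 r1 cosb in auto)
        have p2: "1 + r^2 - 2 * 1 * r * cos (2 * pi * (t2 - a)) > 0"
          by (rule den_pos) (use r0 r1 cosb in auto)
        have "(1 - r^2) / (1 + r^2 - 2 * 1 * r * cos (2 * pi * (t2 - a))) \<le>
              (1 - r^2) / (1 + r^2 - 2 * 1 * r * cos (2 * pi * (t1 - a)))"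
          apply (rule divide_left_mono)
          using c r0 apply simp
          using r0 r1 apply (simp add: power_le_one)
          using p1 p2 by simp
        then show "circ_deriv (psi P) (circ_pi t1) \<ge> circ_deriv (psi P) (circ_pi t2)"
          unfolding f .
      qed
    qed
  qed
qed


end
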